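(* Let $G$ be a finite group, $P$ a normal $p$-subgroup of $G$ and $R\trianglelefteq G$ with $R\le P$ such that $P/R$ is a chief factor of $G$ of order $p^n$ with $n>1$. Suppose that every normal subgroup $V$ of $G$ with $V<P$ satisfies $V\le R$. Let $H$ be a subgroup of $P$ with $R<RH<P$ such that $H$ is cyclic of prime order or of order $4$. If $T$ is a subgroup of $G$ with $HT=G$, then $T=G$. *)

theory Defs
  imports "HOL-Algebra.Algebra"
begin

definition chief_factor :: "('a, 'b) monoid_scheme \<Rightarrow> 'a set \<Rightarrow> 'a set \<Rightarrow> bool" where
  "chief_factor G P R \<longleftrightarrow> P \<lhd> G \<and> R \<lhd> G \<and> R \<subset> P \<and>
     (\<forall>N. N \<lhd> G \<and> R \<subseteq> N \<and> N \<subseteq> P \<longrightarrow> N = R \<or> N = P)"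

end

theory Submission
  imports Defs "HOL-Computational_Algebra.Primes"
begin

lemma (in group) rmult_action:
  assumes Y: "subgroup Y G" and P: "subgroup P G" and YP: "Y \<subseteq> P"
  defines "E \<equiv> {Y #> g | g. g \<in> P}"
  shows "group_action (G\<lparr>carrier := Y\<rparr>) E (\<lambda>x. \<lambda>S \<in> E. S #> inv x)"
proof -
  have Ysub: "Y \<subseteq> carrier G" using Y subgroup.subset by blast
  have Psub: "P \<subseteq> carrier G" using P subgroup.subset by blast
  have memE: "\<exists>g\<in>P. S = Y #> g" if "S \<in> E" for S using that unfolding E_def by blast
  have clos: "S #> inv x \<in> E" if "S \<in> E" "x \<in> Y" for S x
  proof -
    obtain g where g: "g \<in> P" "S = Y #> g" using memE[OF \<open>S \<in> E\<close>] by blast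
    have gc: "g \<in> carrier G" using g Psub by auto
    have xc: "x \<in> carrier G" using that Ysub by auto
    have "S #> inv x = Y #> (g \<otimes> inv x)"
      using g coset_mult_assoc[OF Ysub gc inv_closed[OF xc]] by simp
    moreover have "g \<otimes> inv x \<in> P" using g that YP P
      by (meson subgroup.m_closed subgroup.m_inv_closed subsetD)
    ultimately show ?thesis unfolding E_def by blast
  qed
  have bk: "(S #> inv x) #> x = S" if "S \<in> E" "x \<in> Y" for S x
  proof -
    obtain g where g: "g \<in> P" "S = Y #> g" using memE[OF \<open>S \<in> E\<close>] by blast
    have Sc: "S \<subseteq> carrier G" using g Ysub Psub r_coset_subset_G[OF Ysub, of g] by auto
    have xc: "x \<in> carrier G" using that Ysub by auto
    show ?thesis using coset_mult_assoc[OF Sc inv_closed[OF xc] xc] Sc xc by simp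
  qed
  have bij: "(\<lambda>S \<in> E. S #> inv x) \<in> Bij E" if x: "x \<in> Y" for x
  proof -
    have "bij_betw (\<lambda>S \<in> E. S #> inv x) E E"
    proof (rule bij_betwI[where g = "\<lambda>S. S #> x"])
      have ix: "inv x \<in> Y" using subgroup.m_inv_closed[OF Y x] by simp
      have xc: "x \<in> carrier G" using x Ysub by auto
      show "(\<lambda>S\<in>E. S #> inv x) \<in> E \<rightarrow> E"
      proof (rule funcsetI)
        fix S assume S: "S \<in> E"
        show "(\<lambda>S\<in>E. S #> inv x) S \<in> E" using S clos[OF S x] by simp
      qed
      show "(\<lambda>S. S #> x) \<in> E \<rightarrow> E"
      proof (rule funcsetI)
        fix S assume S: "S \<in> E"
        show "S #> x \<in> E" using clos[OF S ix] xc by simp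
      qed
      show "(\<lambda>S\<in>E. S #> inv x) S #> x = S" if S: "S \<in> E" for S
        using bk[OF S x] S by simp
      show "(\<lambda>S\<in>E. S #> inv x) (S #> x) = S" if S: "S \<in> E" for S
      proof -
        have "S #> x \<in> E" using clos[OF S ix] xc by simp
        moreover have "(S #> inv (inv x)) #> inv x = S" using bk[OF S ix] .
        ultimately show ?thesis using xc by simp
      qed
    qed
    thus ?thesis unfolding Bij_def by auto
  qed
  have grpY: "group (G\<lparr>carrier := Y\<rparr>)" using subgroup.subgroup_is_group[OF Y is_group] .
  have hom: "(\<lambda>x. \<lambda>S \<in> E. S #> inv x) \<in> hom (G\<lparr>carrier := Y\<rparr>) (BijGroup E)"
  proof (rule homI)
    show "(\<lambda>S \<in> E. S #> inv x) \<in> carrier (BijGroup E)" if "x \<in> carrier (G\<lparr>carrier := Y\<rparr>)" for x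
      using bij that by (simp add: BijGroup_def)
    fix x y assume "x \<in> carrier (G\<lparr>carrier := Y\<rparr>)" "y \<in> carrier (G\<lparr>carrier := Y\<rparr>)"
    hence x: "x \<in> Y" and y: "y \<in> Y" by auto
    have xc: "x \<in> carrier G" and yc: "y \<in> carrier G" using x y Ysub by auto
    have eq: "S #> inv (x \<otimes> y) = (S #> inv y) #> inv x" if "S \<in> E" for S
    proof -
      obtain g where g: "g \<in> P" "S = Y #> g" using memE[OF \<open>S \<in> E\<close>] by blast
      have Sc: "S \<subseteq> carrier G" using g Ysub Psub r_coset_subset_G[OF Ysub, of g] by auto
      show ?thesis using Sc xc yc by (simp add: coset_mult_assoc inv_mult_group)
    qed
    have m: "(\<lambda>S \<in> E. S #> inv x) \<otimes>\<^bsub>BijGroup E\<^esub> (\<lambda>S \<in> E. S #> inv y)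
        = compose E (\<lambda>S \<in> E. S #> inv x) (\<lambda>S \<in> E. S #> inv y)"
      using bij[OF x] bij[OF y] by (simp add: BijGroup_def)
    have c: "compose E (\<lambda>S \<in> E. S #> inv x) (\<lambda>S \<in> E. S #> inv y) = (\<lambda>S \<in> E. S #> inv (x \<otimes> y))"
      unfolding compose_def
    proof (rule restrict_ext)
      fix S assume S: "S \<in> E"
      have "S #> inv y \<in> E" using clos[OF S y] .
      thus "(\<lambda>S \<in> E. S #> inv x) ((\<lambda>S \<in> E. S #> inv y) S) = S #> inv (x \<otimes> y)"
        using S eq[OF S] by simp
    qed
    show "(\<lambda>S \<in> E. S #> inv (x \<otimes>\<^bsub>G\<lparr>carrier := Y\<rparr>\<^esub> y)) =
          (\<lambda>S \<in> E. S #> inv x) \<otimes>\<^bsub>BijGroup E\<^esub> (\<lambda>S \<in> E. S #> inv y)"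
      using m c by simp
  qed
  show ?thesis
    unfolding group_action_def group_hom_def group_hom_axioms_def
    using grpY group_BijGroup hom by blast
qed

lemma (in group) pgroup_normalizer_grows:
  assumes P: "subgroup P G" and fin: "finite P" and pr: "Factorial_Ring.prime p"
    and cP: "card P = p ^ k" and Y: "subgroup Y G" and YP: "Y \<subset> P"
  shows "\<exists>g\<in>P. g \<notin> Y \<and> (\<forall>y\<in>Y. g \<otimes> y \<otimes> inv g \<in> Y)"
proof (rule ccontr)
  assume nf: "\<not> ?thesis"
  define E where "E = {Y #> g | g. g \<in> P}"
  define \<phi> where "\<phi> = (\<lambda>x. \<lambda>S \<in> E. S #> inv x)"
  let ?Y = "G\<lparr>carrier := Y\<rparr>"
  have Ysub: "Y \<subseteq> carrier G" using Y subgroup.subset by blast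
  have Psub: "P \<subseteq> carrier G" using P subgroup.subset by blast
  have YP': "Y \<subseteq> P" using YP by auto
  interpret A: group_action ?Y E \<phi>
    using rmult_action[OF Y P YP'] unfolding E_def \<phi>_def by simp
  have gP: "group (G\<lparr>carrier := P\<rparr>)" using subgroup.subgroup_is_group[OF P is_group] .
  have sYP: "subgroup Y (G\<lparr>carrier := P\<rparr>)" using subgroup_incl[OF Y P YP'] .
  have rc: "rcosets\<^bsub>G\<lparr>carrier := P\<rparr>\<^esub> Y = E"
    unfolding RCOSETS_def r_coset_def E_def by auto
  have lag: "card E * card Y = card P"
    using group.lagrange[OF gP sYP] rc by (simp add: order_def)
  have finE: "finite E" unfolding E_def using fin by simp
  have finY: "finite Y" using fin YP' finite_subset by blast
  have cYlt: "card Y < card P" using psubset_card_mono[OF fin YP] .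
  have cYdvd: "card Y dvd p ^ k" using lag cP by (metis dvd_triv_right)
  have cEdvd: "card E dvd p ^ k" using lag cP by (metis dvd_triv_left)
  have cE1: "card E \<noteq> 1" using lag cYlt by auto
  have pE: "p dvd card E"
  proof -
    obtain i where "i \<le> k" "card E = p ^ i" using cEdvd divides_primepow_nat[OF pr] by blast
    moreover have "i \<noteq> 0" using cE1 calculation by auto
    ultimately show ?thesis by (simp add: dvd_power)
  qed
  have YE: "Y \<in> E" unfolding E_def using coset_mult_one[OF Ysub] subgroup.one_closed[OF P]
    by (metis (mono_tags, lifting) mem_Collect_eq)
  have orbeq: "orbit ?Y \<phi> S = {\<phi> g S | g. g \<in> Y}" for S by (simp add: orbit_def)
  have orbY: "orbit ?Y \<phi> Y = {Y}"
  proof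
    show "{Y} \<subseteq> orbit ?Y \<phi> Y" using A.orbit_refl[OF YE] by auto
    show "orbit ?Y \<phi> Y \<subseteq> {Y}"
    proof
      fix S assume "S \<in> orbit ?Y \<phi> Y"
      then obtain g where g: "g \<in> Y" "S = \<phi> g Y" unfolding orbeq by blast
      have "inv g \<in> Y" using subgroup.m_inv_closed[OF Y g(1)] by simp
      hence "Y #> inv g = Y" using coset_join2[OF _ Y] Ysub by blast
      thus "S \<in> {Y}" using g YE unfolding \<phi>_def by simp
    qed
  qed
  have fixed: "S = Y" if S: "S \<in> E" and c1: "card (orbit ?Y \<phi> S) = 1" for S
  proof -
    obtain g where g: "g \<in> P" "S = Y #> g" using S unfolding E_def by blast
    have gc: "g \<in> carrier G" using g Psub by auto
    have os: "orbit ?Y \<phi> S = {S}" using c1 A.orbit_refl[OF S] by (metis card_1_singletonE singletonD)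
    have "g \<otimes> y \<otimes> inv g \<in> Y" if y: "y \<in> Y" for y
    proof -
      have yc: "y \<in> carrier G" using y Ysub by auto
      have "inv y \<in> Y" using subgroup.m_inv_closed[OF Y y] by simp
      hence "\<phi> (inv y) S \<in> orbit ?Y \<phi> S" unfolding orbeq by blast
      hence "\<phi> (inv y) S = S" using os by auto
      hence "S #> y = S" using S yc unfolding \<phi>_def by simp
      hence eq: "Y #> (g \<otimes> y) = Y #> g" using g coset_mult_assoc[OF Ysub gc yc] by simp
      have "g \<otimes> y \<in> Y #> (g \<otimes> y)" using rcos_self[OF _ Y] gc yc by simp
      hence "g \<otimes> y \<in> Y #> g" using eq by simp
      then obtain h where h: "h \<in> Y" "g \<otimes> y = h \<otimes> g" unfolding r_coset_def by auto
      have hc: "h \<in> carrier G" using h Ysub by auto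
      have "g \<otimes> y \<otimes> inv g = h" using h gc hc yc by (simp add: m_assoc)
      thus ?thesis using h by simp
    qed
    hence "g \<in> Y" using nf g by blast
    thus ?thesis using g coset_join2[OF gc Y] by simp
  qed
  have dv: "p dvd card orb" if orb: "orb \<in> orbits ?Y E \<phi> - {{Y}}" for orb
  proof -
    obtain S where S: "S \<in> E" "orb = orbit ?Y \<phi> S" using orb unfolding orbits_def by auto
    have "card (orbit ?Y \<phi> S) * card (stabilizer ?Y \<phi> S) = order ?Y"
      using A.orbit_stabilizer_theorem[OF S(1)] .
    hence "card orb dvd card Y" using S by (metis dvd_triv_left order_def partial_object.select_convs(1) partial_object.surjective partial_object.update_convs(1))
    hence "card orb dvd p ^ k" using cYdvd dvd_trans by blast
    then obtain i where i: "card orb = p ^ i" using divides_primepow_nat[OF pr] by blast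
    have "i \<noteq> 0"
    proof
      assume "i = 0"
      hence "card (orbit ?Y \<phi> S) = 1" using i S by simp
      hence "S = Y" using fixed S by blast
      thus False using orb S orbY by auto
    qed
    thus ?thesis using i by (simp add: dvd_power)
  qed
  have finO: "finite (orbits ?Y E \<phi>)"
  proof -
    have "orbits ?Y E \<phi> \<subseteq> Pow E" using A.orbits_coverture by auto
    thus ?thesis using finE by (meson finite_Pow_iff finite_subset)
  qed
  have YO: "{Y} \<in> orbits ?Y E \<phi>" unfolding orbits_def using YE orbY by auto
  have "card E = (\<Sum>orb\<in>orbits ?Y E \<phi>. card orb)"
    using A.disjoint_sum[OF finE, of "\<lambda>_. 1::nat"] by simp
  also have "\<dots> = card {Y} + (\<Sum>orb\<in>orbits ?Y E \<phi> - {{Y}}. card orb)"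
    using sum.remove[OF finO YO, of card] by simp
  finally have cEq: "card E = 1 + (\<Sum>orb\<in>orbits ?Y E \<phi> - {{Y}}. card orb)" by simp
  have sd: "p dvd (\<Sum>orb\<in>orbits ?Y E \<phi> - {{Y}}. card orb)" by (rule dvd_sum) (rule dv)
  have "p dvd card E - (\<Sum>orb\<in>orbits ?Y E \<phi> - {{Y}}. card orb)" using dvd_diff_nat[OF pE sd] .
  hence "p dvd 1" using cEq by simp
  thus False using pr not_prime_unit by blast
qed

theorem lemma4p5:
  fixes G (structure) and p n :: nat and P R H T :: "'a set"
  assumes "group G" and "finite (carrier G)"
    and "Factorial_Ring.prime p"
    and "P \<lhd> G" and "\<exists>k. card P = p ^ k"
    and "R \<lhd> G" and "R \<subseteq> P"
    and "chief_factor G P R"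
    and "order ((G\<lparr>carrier := P\<rparr>) Mod R) = p ^ n" and "n > 1"
    and "\<forall>V. V \<lhd> G \<and> V \<subset> P \<longrightarrow> V \<subseteq> R"
    and "subgroup H G" and "H \<subseteq> P"
    and "R \<subset> R <#> H" and "R <#> H \<subset> P"
    and "cyclic_group (subgroup_generated G H)"
    and "Factorial_Ring.prime (card H) \<or> card H = 4"
    and "subgroup T G" and "H <#> T = carrier G"
  shows "T = carrier G"
proof -
  interpret group G by fact
  note PN = \<open>P \<lhd> G\<close> and RN = \<open>R \<lhd> G\<close> and HS = \<open>subgroup H G\<close> and TS = \<open>subgroup T G\<close>
  note HT = \<open>H <#> T = carrier G\<close> and HP = \<open>H \<subseteq> P\<close>
  have PS: "subgroup P G" using PN normal_imp_subgroup by blast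
  have Psub: "P \<subseteq> carrier G" using PS subgroup.subset by blast
  have Tsub: "T \<subseteq> carrier G" using TS subgroup.subset by blast
  have Hsub: "H \<subseteq> carrier G" using HS subgroup.subset by blast
  have finP: "finite P" using Psub \<open>finite (carrier G)\<close> finite_subset by blast
  obtain k where cP: "card P = p ^ k" using \<open>\<exists>k. card P = p ^ k\<close> by blast
  have Pconj: "x \<otimes> y \<otimes> inv x \<in> P" if "x \<in> carrier G" "y \<in> P" for x y
    using normal.inv_op_closed2[OF PN that] .
  have Rconj: "x \<otimes> y \<otimes> inv x \<in> R" if "x \<in> carrier G" "y \<in> R" for x y
    using normal.inv_op_closed2[OF RN that] .
  have decomp: "\<exists>h\<in>H. \<exists>t\<in>T. x = h \<otimes> t" if "x \<in> carrier G" for x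
  proof -
    have "x \<in> H <#> T" using HT that by simp
    thus ?thesis unfolding set_mult_def by blast
  qed
  show ?thesis
  proof (rule ccontr)
    assume Tne: "T \<noteq> carrier G"
    have PnT: "\<not> P \<subseteq> T"
    proof
      assume "P \<subseteq> T"
      hence "H \<subseteq> T" using HP by auto
      have "carrier G \<subseteq> T"
      proof
        fix x assume "x \<in> carrier G"
        then obtain h t where "h \<in> H" "t \<in> T" "x = h \<otimes> t" using decomp by blast
        thus "x \<in> T" using \<open>H \<subseteq> T\<close> subgroup.m_closed[OF TS] by blast
      qed
      thus False using Tne Tsub by blast
    qed
    define Q where "Q = P \<inter> T"
    define tinv where "tinv Y \<longleftrightarrow> (\<forall>t\<in>T. \<forall>y\<in>Y. t \<otimes> y \<otimes> inv t \<in> Y)" for Y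
    define M where "M = {Y. subgroup Y G \<and> Q \<subseteq> Y \<and> Y \<subset> P \<and> tinv Y}"
    have QM: "Q \<in> M"
    proof -
      have "subgroup Q G" unfolding Q_def using subgroups_Inter_pair[OF PS TS] .
      moreover have "Q \<subset> P" unfolding Q_def using PnT by blast
      moreover have "tinv Q" unfolding tinv_def Q_def
      proof (intro ballI)
        fix t y assume t: "t \<in> T" and y: "y \<in> P \<inter> T"
        have tc: "t \<in> carrier G" using t Tsub by auto
        have "t \<otimes> y \<otimes> inv t \<in> P" using Pconj[OF tc] y by blast
        moreover have "t \<otimes> y \<otimes> inv t \<in> T"
          using t y subgroup.m_closed[OF TS] subgroup.m_inv_closed[OF TS] by blast
        ultimately show "t \<otimes> y \<otimes> inv t \<in> P \<inter> T" by blast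
      qed
      ultimately show ?thesis unfolding M_def by blast
    qed
    have finM: "finite M"
    proof -
      have "M \<subseteq> Pow P" unfolding M_def by auto
      thus ?thesis using finP by (meson finite_Pow_iff finite_subset)
    qed
    obtain Y where YM: "Y \<in> M" and Ymax: "\<And>Z. Z \<in> M \<Longrightarrow> Y \<subseteq> Z \<Longrightarrow> Z = Y"
      using finite_has_maximal[OF finM] QM by blast
    have YS: "subgroup Y G" and QY: "Q \<subseteq> Y" and YP: "Y \<subset> P" and Ytinv: "tinv Y"
      using YM unfolding M_def by auto
    have Ysub: "Y \<subseteq> carrier G" using YS subgroup.subset by blast
    define N where "N = {g\<in>P. \<forall>y\<in>Y. g \<otimes> y \<otimes> inv g \<in> Y \<and> inv g \<otimes> y \<otimes> g \<in> Y}"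
    have Nsub: "N \<subseteq> P" unfolding N_def by auto
    have NS: "subgroup N G"
    proof (rule subgroupI)
      show "N \<subseteq> carrier G" using Nsub Psub by auto
      have "\<one> \<in> N" unfolding N_def using subgroup.one_closed[OF PS] Ysub by auto
      thus "N \<noteq> {}" by blast
      show "inv a \<in> N" if a: "a \<in> N" for a
      proof -
        have ac: "a \<in> carrier G" using a Nsub Psub by auto
        show ?thesis using a ac subgroup.m_inv_closed[OF PS] unfolding N_def by auto
      qed
      show "a \<otimes> b \<in> N" if a: "a \<in> N" and b: "b \<in> N" for a b
      proof -
        have ac: "a \<in> carrier G" and bc: "b \<in> carrier G" using a b Nsub Psub by auto
        have "a \<otimes> b \<in> P" using a b Nsub subgroup.m_closed[OF PS] by auto
        moreover have "a \<otimes> b \<otimes> y \<otimes> inv (a \<otimes> b) \<in> Y \<and> inv (a \<otimes> b) \<otimes> y \<otimes> (a \<otimes> b) \<in> Y"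
          if y: "y \<in> Y" for y
        proof -
          have yc: "y \<in> carrier G" using y Ysub by auto
          have e1: "a \<otimes> b \<otimes> y \<otimes> inv (a \<otimes> b) = a \<otimes> (b \<otimes> y \<otimes> inv b) \<otimes> inv a"
            using ac bc yc by (simp add: inv_mult_group m_assoc)
          have e2: "inv (a \<otimes> b) \<otimes> y \<otimes> (a \<otimes> b) = inv b \<otimes> (inv a \<otimes> y \<otimes> a) \<otimes> b"
            using ac bc yc by (simp add: inv_mult_group m_assoc)
          have "b \<otimes> y \<otimes> inv b \<in> Y" "inv a \<otimes> y \<otimes> a \<in> Y" using a b y unfolding N_def by auto
          thus ?thesis using e1 e2 a b unfolding N_def by auto
        qed
        ultimately show ?thesis unfolding N_def by auto
      qed
    qed
    have YN: "Y \<subseteq> N"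
    proof
      fix g assume g: "g \<in> Y"
      have gc: "g \<in> carrier G" using g Ysub by auto
      have "g \<in> P" using g YP by auto
      moreover have "g \<otimes> y \<otimes> inv g \<in> Y \<and> inv g \<otimes> y \<otimes> g \<in> Y" if "y \<in> Y" for y
        using g that subgroup.m_closed[OF YS] subgroup.m_inv_closed[OF YS] by blast
      ultimately show "g \<in> N" unfolding N_def by auto
    qed
    have Ntinv: "tinv N" unfolding tinv_def
    proof (intro ballI)
      fix t g assume t: "t \<in> T" and g: "g \<in> N"
      have tc: "t \<in> carrier G" using t Tsub by auto
      have gc: "g \<in> carrier G" using g Nsub Psub by auto
      have it: "inv t \<in> T" using subgroup.m_inv_closed[OF TS t] .
      have "t \<otimes> g \<otimes> inv t \<in> P" using Pconj[OF tc] g Nsub by auto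
      moreover have "(t \<otimes> g \<otimes> inv t) \<otimes> y \<otimes> inv (t \<otimes> g \<otimes> inv t) \<in> Y \<and>
          inv (t \<otimes> g \<otimes> inv t) \<otimes> y \<otimes> (t \<otimes> g \<otimes> inv t) \<in> Y" if y: "y \<in> Y" for y
      proof -
        have yc: "y \<in> carrier G" using y Ysub by auto
        have y1: "inv t \<otimes> y \<otimes> inv (inv t) \<in> Y" using Ytinv it y unfolding tinv_def by blast
        hence y1': "inv t \<otimes> y \<otimes> t \<in> Y" using tc by simp
        have y1c: "inv t \<otimes> y \<otimes> t \<in> carrier G" using tc yc by simp
        have y2: "g \<otimes> (inv t \<otimes> y \<otimes> t) \<otimes> inv g \<in> Y" "inv g \<otimes> (inv t \<otimes> y \<otimes> t) \<otimes> g \<in> Y"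
          using g y1' unfolding N_def by auto
        have y3: "t \<otimes> (g \<otimes> (inv t \<otimes> y \<otimes> t) \<otimes> inv g) \<otimes> inv t \<in> Y"
             "t \<otimes> (inv g \<otimes> (inv t \<otimes> y \<otimes> t) \<otimes> g) \<otimes> inv t \<in> Y"
          using y2 t Ytinv unfolding tinv_def by auto
        have e1: "(t \<otimes> g \<otimes> inv t) \<otimes> y \<otimes> inv (t \<otimes> g \<otimes> inv t) = t \<otimes> (g \<otimes> (inv t \<otimes> y \<otimes> t) \<otimes> inv g) \<otimes> inv t"
          using tc gc yc by (simp add: inv_mult_group m_assoc)
        have e2: "inv (t \<otimes> g \<otimes> inv t) \<otimes> y \<otimes> (t \<otimes> g \<otimes> inv t) = t \<otimes> (inv g \<otimes> (inv t \<otimes> y \<otimes> t) \<otimes> g) \<otimes> inv t"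
          using tc gc yc by (simp add: inv_mult_group m_assoc)
        show ?thesis using e1 e2 y3 by simp
      qed
      ultimately show "t \<otimes> g \<otimes> inv t \<in> N" unfolding N_def by auto
    qed
    show False
    proof (cases "N = P")
      case True
      have "Y \<lhd> G" unfolding normal_inv_iff
      proof (intro conjI ballI)
        show "subgroup Y G" by fact
        fix x y assume x: "x \<in> carrier G" and y: "y \<in> Y"
        obtain h t where h: "h \<in> H" and t: "t \<in> T" and xe: "x = h \<otimes> t" using decomp[OF x] by blast
        have hc: "h \<in> carrier G" and tc: "t \<in> carrier G" using h t Hsub Tsub by auto
        have yc: "y \<in> carrier G" using y Ysub by auto
        have y1: "t \<otimes> y \<otimes> inv t \<in> Y" using Ytinv t y unfolding tinv_def by blast
        have "h \<in> N" using True h HP by auto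
        hence y2: "h \<otimes> (t \<otimes> y \<otimes> inv t) \<otimes> inv h \<in> Y" using y1 unfolding N_def by auto
        have "x \<otimes> y \<otimes> inv x = h \<otimes> (t \<otimes> y \<otimes> inv t) \<otimes> inv h"
          using xe hc tc yc by (simp add: inv_mult_group m_assoc)
        thus "x \<otimes> y \<otimes> inv x \<in> Y" using y2 by simp
      qed
      hence YR: "Y \<subseteq> R" using spec[OF \<open>\<forall>V. V \<lhd> G \<and> V \<subset> P \<longrightarrow> V \<subseteq> R\<close>, of Y] YP by simp
      have "P \<subseteq> R <#> H"
      proof
        fix z assume z: "z \<in> P"
        hence zc: "z \<in> carrier G" using Psub by auto
        obtain h t where h: "h \<in> H" and t: "t \<in> T" and ze: "z = h \<otimes> t" using decomp[OF zc] by blast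
        have hc: "h \<in> carrier G" and tc: "t \<in> carrier G" using h t Hsub Tsub by auto
        have "t = inv h \<otimes> z" using ze hc tc by (simp add: m_assoc[symmetric])
        moreover have "inv h \<in> P" using h HP subgroup.m_inv_closed[OF PS] by auto
        ultimately have "t \<in> P" using z subgroup.m_closed[OF PS] by simp
        hence "t \<in> R" using t QY YR unfolding Q_def by auto
        hence r: "h \<otimes> t \<otimes> inv h \<in> R" using Rconj hc by blast
        have "z = (h \<otimes> t \<otimes> inv h) \<otimes> h" using ze hc tc by (simp add: m_assoc)
        thus "z \<in> R <#> H" using r h unfolding set_mult_def by blast
      qed
      thus False using \<open>R <#> H \<subset> P\<close> by blast
    next
      case False
      hence NP: "N \<subset> P" using Nsub by blast
      obtain g where g: "g \<in> P" "g \<notin> Y" and gy: "\<forall>y\<in>Y. g \<otimes> y \<otimes> inv g \<in> Y"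
        using pgroup_normalizer_grows[OF PS finP \<open>Factorial_Ring.prime p\<close> cP YS YP] by blast
      have gc: "g \<in> carrier G" using g Psub by auto
      have finY: "finite Y" using YP finP finite_subset by auto
      have img: "(\<lambda>y. g \<otimes> y \<otimes> inv g) ` Y = Y"
      proof (rule endo_inj_surj[OF finY])
        show "(\<lambda>y. g \<otimes> y \<otimes> inv g) ` Y \<subseteq> Y" using gy by auto
        show "inj_on (\<lambda>y. g \<otimes> y \<otimes> inv g) Y"
        proof (rule inj_onI)
          fix x y assume x: "x \<in> Y" and y: "y \<in> Y" and e: "g \<otimes> x \<otimes> inv g = g \<otimes> y \<otimes> inv g"
          have xc: "x \<in> carrier G" and yc: "y \<in> carrier G" using x y Ysub by auto
          from e have "g \<otimes> x = g \<otimes> y" using gc xc yc by simp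
          thus "x = y" using gc xc yc by simp
        qed
      qed
      have gN: "g \<in> N"
      proof -
        have "inv g \<otimes> y \<otimes> g \<in> Y" if y: "y \<in> Y" for y
        proof -
          obtain z where z: "z \<in> Y" "y = g \<otimes> z \<otimes> inv g" using y img by blast
          have zc: "z \<in> carrier G" using z Ysub by auto
          have cancel: "\<And>a w. a \<in> carrier G \<Longrightarrow> w \<in> carrier G \<Longrightarrow> inv a \<otimes> (a \<otimes> w) = w"
            by (simp add: m_assoc[symmetric])
          have "inv g \<otimes> y \<otimes> g = z" using z(2) gc zc by (simp add: m_assoc cancel)
          thus ?thesis using z by simp
        qed
        thus ?thesis using g gy unfolding N_def by auto
      qed
      have "N \<in> M" unfolding M_def using NS QY YN NP Ntinv by auto
      hence "N = Y" using Ymax YN by blast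
      thus False using gN g by blast
    qed
  qed
qed

end
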